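(* Let $\Delta$ be a finite, flag, simply connected simplicial complex, with $\mathcal{P}_H$, $q$, $T$, $p_n$, $L$ and $\Phi_n$ as in the context. Then for all $e\in\mathrm{Edge}(\Delta)$ and all $n\in\mathbb{Z}$, $\mathrm{Area}_{\mathcal{P}_H}\big(\Phi_n(e\overline{e})\big)\le(2L+1)|n|+1$.
   Context: $\mathrm{Edge}(\Delta)$ is the set of directed edges of $\Delta$; for $e$ in it, $\iota e$, $\tau e$ are its initial and terminal vertices and $\overline{e}$ is the reversed edge. $e_1\cdot\ldots\cdot e_l$ is a combinatorial path if $\tau e_i=\iota e_{i+1}$, and a combinatorial 1-cycle if also $\tau e_l=\iota e_1$. $\mathcal{P}_H=\langle\mathrm{Edge}(\Delta)\mid\mathcal{R}_H\rangle$ where $\mathcal{R}_H$ consists of the words $e\overline{e}$ ($e\in\mathrm{Edge}(\Delta)$) and $efg$, $e^{-1}f^{-1}g^{-1}$ for every combinatorial 1-cycle $e\cdot f\cdot g$ (a finite presentation of the Bestvina–Brady group $H_\Delta$). For a word $w$ over $\mathrm{Edge}(\Delta)^{\pm1}$ representing the identity, $\mathrm{Area}_{\mathcal{P}_H}(w)$ is the least $m$ such that $w$ is freely equal to $\prod_{i=1}^m x_ir_ix_i^{-1}$ with $r_i\in\mathcal{R}_H^{\pm1}$. For a letter $e$ and $m\in\mathbb{Z}$, $e^m$ denotes the word of $m$ copies of $e$ if $m\ge0$ and $|m|$ copies of $e^{-1}$ if $m<0$. Fix a vertex $q$ and a spanning tree $T$ of the 1-skeleton of $\Delta$; $p_n(u,v)=e_1^n\cdots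 e_l^n$ where $e_1\cdot\ldots\cdot e_l$ is the unique geodesic combinatorial path in $T$ from $u$ to $v$. $L$ is the maximum, over pairs of vertices $u,v$, of the edge-path distance between $u$ and $v$ in $T$. For $n\in\mathbb{Z}$, $\Phi_n$ is the endomorphism of the free monoid on $\mathrm{Edge}(\Delta)^{\pm1}$ given by $\Phi_n(e)=p_n(q,\iota e)\,e^{n+1}\,p_n(\tau e,q)$ and $\Phi_n(e^{-1})=\Phi_n(e)^{-1}$ (formal inverse word). *)

theory Defs
  imports "HOL-Analysis.Analysis"
begin

definition abs_simplicial_complex :: "'v set set \<Rightarrow> bool" where
  "abs_simplicial_complex \<Delta> \<longleftrightarrow>
     (\<forall>\<sigma>\<in>\<Delta>. finite \<sigma> \<and> \<sigma> \<noteq> {}) \<and>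
     (\<forall>\<sigma>\<in>\<Delta>. \<forall>\<tau>. \<tau> \<subseteq> \<sigma> \<and> \<tau> \<noteq> {} \<longrightarrow> \<tau> \<in> \<Delta>)"

definition vertices :: "'v set set \<Rightarrow> 'v set" where
  "vertices \<Delta> = \<Union>\<Delta>"

definition flag :: "'v set set \<Rightarrow> bool" where
  "flag \<Delta> \<longleftrightarrow>
     (\<forall>S. finite S \<and> S \<noteq> {} \<and> S \<subseteq> vertices \<Delta> \<and>
          (\<forall>u\<in>S. \<forall>v\<in>S. u \<noteq> v \<longrightarrow> {u, v} \<in> \<Delta>) \<longrightarrow> S \<in> \<Delta>)"

text \<open>Geometric realization, as the set of barycentric coordinate functions
  (nonnegative, summing to 1, with support a simplex) inside the product space
  of functions from vertices to reals.\<close>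
definition geom_realization :: "'v set set \<Rightarrow> ('v \<Rightarrow> real) set" where
  "geom_realization \<Delta> =
     {x. (\<forall>v. 0 \<le> x v) \<and> {v. x v \<noteq> 0} \<in> \<Delta> \<and> sum x {v. x v \<noteq> 0} = 1}"

definition Edge :: "'v set set \<Rightarrow> ('v \<times> 'v) set" where
  "Edge \<Delta> = {(u, v). u \<noteq> v \<and> {u, v} \<in> \<Delta>}"

abbreviation iota :: "'v \<times> 'v \<Rightarrow> 'v" where "iota e \<equiv> fst e"
abbreviation tau :: "'v \<times> 'v \<Rightarrow> 'v" where "tau e \<equiv> snd e"
definition rev_edge :: "'v \<times> 'v \<Rightarrow> 'v \<times> 'v" where
  "rev_edge e = (snd e, fst e)"

fun comb_path :: "('v \<times> 'v) set \<Rightarrow> 'v \<Rightarrow> 'v \<Rightarrow> ('v \<times> 'v) list \<Rightarrow> bool" where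
  "comb_path E u v [] \<longleftrightarrow> u = v"
| "comb_path E u v (e # es) \<longleftrightarrow> e \<in> E \<and> iota e = u \<and> comb_path E (tau e) v es"

definition comb_1cycle3 :: "'v set set \<Rightarrow> ('v \<times> 'v) \<Rightarrow> ('v \<times> 'v) \<Rightarrow> ('v \<times> 'v) \<Rightarrow> bool" where
  "comb_1cycle3 \<Delta> e f g \<longleftrightarrow> e \<in> Edge \<Delta> \<and> f \<in> Edge \<Delta> \<and> g \<in> Edge \<Delta> \<and>
     tau e = iota f \<and> tau f = iota g \<and> tau g = iota e"

definition tree_edges :: "'v set set \<Rightarrow> ('v \<times> 'v) set" where
  "tree_edges T = {(u, v). u \<noteq> v \<and> {u, v} \<in> T}"

definition spanning_tree :: "'v set set \<Rightarrow> 'v set set \<Rightarrow> bool" where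
  "spanning_tree \<Delta> T \<longleftrightarrow>
     T \<subseteq> {{u, v} | u v. u \<noteq> v \<and> {u, v} \<in> \<Delta>} \<and>
     (\<forall>u\<in>vertices \<Delta>. \<forall>v\<in>vertices \<Delta>. \<exists>es. comb_path (tree_edges T) u v es) \<and>
     \<not> (\<exists>vs. length vs \<ge> 3 \<and> distinct vs \<and>
           (\<forall>i < length vs. {vs ! i, vs ! ((i + 1) mod length vs)} \<in> T))"

definition tree_geodesic :: "'v set set \<Rightarrow> 'v \<Rightarrow> 'v \<Rightarrow> ('v \<times> 'v) list" where
  "tree_geodesic T u v =
     (THE es. comb_path (tree_edges T) u v es \<and>
        (\<forall>es'. comb_path (tree_edges T) u v es' \<longrightarrow> length es \<le> length es'))"

definition tree_L :: "'v set set \<Rightarrow> 'v set set \<Rightarrow> nat" where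
  "tree_L \<Delta> T = Max {length (tree_geodesic T u v) | u v. u \<in> vertices \<Delta> \<and> v \<in> vertices \<Delta>}"

text \<open>A letter is a pair (e, b); b = True means the formal inverse e^{-1}.\<close>
type_synonym 'v letter = "('v \<times> 'v) \<times> bool"
type_synonym 'v word = "'v letter list"

definition inv_letter :: "'v letter \<Rightarrow> 'v letter" where
  "inv_letter a = (fst a, \<not> snd a)"

definition inv_word :: "'v word \<Rightarrow> 'v word" where
  "inv_word w = rev (map inv_letter w)"

definition free_red_step :: "'v word \<Rightarrow> 'v word \<Rightarrow> bool" where
  "free_red_step w w' \<longleftrightarrow> (\<exists>xs ys a. w = xs @ [a, inv_letter a] @ ys \<and> w' = xs @ ys)"

definition freely_equal :: "'v word \<Rightarrow> 'v word \<Rightarrow> bool" where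
  "freely_equal = (symclp free_red_step)\<^sup>*\<^sup>*"

definition word_over :: "'v set set \<Rightarrow> 'v word \<Rightarrow> bool" where
  "word_over \<Delta> w \<longleftrightarrow> (\<forall>a\<in>set w. fst a \<in> Edge \<Delta>)"

definition epow :: "('v \<times> 'v) \<Rightarrow> int \<Rightarrow> 'v word" where
  "epow e m = (if 0 \<le> m then replicate (nat m) (e, False) else replicate (nat (- m)) (e, True))"

definition RH :: "'v set set \<Rightarrow> 'v word set" where
  "RH \<Delta> =
     {[(e, False), (rev_edge e, False)] | e. e \<in> Edge \<Delta>} \<union>
     {[(e, False), (f, False), (g, False)] | e f g. comb_1cycle3 \<Delta> e f g} \<union>
     {[(e, True), (f, True), (g, True)] | e f g. comb_1cycle3 \<Delta> e f g}"

definition Area :: "'v set set \<Rightarrow> 'v word \<Rightarrow> nat" where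
  "Area \<Delta> w = (LEAST m. \<exists>xs rs. length xs = m \<and> length rs = m \<and>
       (\<forall>x\<in>set xs. word_over \<Delta> x) \<and>
       (\<forall>r\<in>set rs. r \<in> RH \<Delta> \<or> inv_word r \<in> RH \<Delta>) \<and>
       freely_equal w (concat (map2 (\<lambda>x r. x @ r @ inv_word x) xs rs)))"

definition p_n :: "'v set set \<Rightarrow> int \<Rightarrow> 'v \<Rightarrow> 'v \<Rightarrow> 'v word" where
  "p_n T n u v = concat (map (\<lambda>e. epow e n) (tree_geodesic T u v))"

definition Phi_letter :: "'v set set \<Rightarrow> 'v \<Rightarrow> int \<Rightarrow> 'v letter \<Rightarrow> 'v word" where
  "Phi_letter T q n a =
     (let e = fst a; w = p_n T n q (iota e) @ epow e (n + 1) @ p_n T n (tau e) q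
      in if snd a then inv_word w else w)"

definition Phi :: "'v set set \<Rightarrow> 'v \<Rightarrow> int \<Rightarrow> 'v word \<Rightarrow> 'v word" where
  "Phi T q n w = concat (map (Phi_letter T q n) w)"

end

theory Submission
  imports Defs
begin

lemma comb_path_append:
  "comb_path E u v (xs @ ys) \<longleftrightarrow> (\<exists>w. comb_path E u w xs \<and> comb_path E w v ys)"
  by (induction xs arbitrary: u) auto

lemma comb_path_take:
  "comb_path E u v es \<Longrightarrow> i \<le> length es \<Longrightarrow> comb_path E u ((u # map snd es) ! i) (take i es)"
proof (induction es arbitrary: u i)
  case Nil then show ?case by simp
next
  case (Cons a es)
  then show ?case by (cases i) auto
qed

lemma comb_path_drop:
  "comb_path E u v es \<Longrightarrow> i \<le> length es \<Longrightarrow> comb_path E ((u # map snd es) ! i) v (drop i es)"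
proof (induction es arbitrary: u i)
  case Nil then show ?case by simp
next
  case (Cons a es)
  then show ?case by (cases i) auto
qed

lemma comb_path_det:
  "comb_path E u v es \<Longrightarrow> comb_path E u v' es' \<Longrightarrow> map snd es = map snd es' \<Longrightarrow> es = es'"
proof (induction es arbitrary: u es')
  case Nil then show ?case by simp
next
  case (Cons a es)
  then obtain b es2 where es': "es' = b # es2" by (cases es') auto
  with Cons show ?case by (cases a, cases b) auto
qed

lemma comb_path_succ:
  "comb_path (tree_edges T) u v es \<Longrightarrow>
    successively (\<lambda>a b. {a, b} \<in> T) (u # map snd es) \<and> last (u # map snd es) = v"
proof (induction es arbitrary: u)
  case Nil then show ?case by simp
next
  case (Cons a es)
  then have "{fst a, snd a} \<in> T" "fst a = u" "comb_path (tree_edges T) (snd a) v es"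
    by (auto simp: tree_edges_def)
  with Cons.IH[of "snd a"] show ?case by (auto simp: successively_Cons)
qed

lemma comb_path_shortcut:
  assumes "comb_path E u v es" "\<not> distinct (u # map snd es)"
  shows "\<exists>es'. comb_path E u v es' \<and> length es' < length es"
proof -
  let ?vs = "u # map snd es"
  obtain i j where ij: "i < j" "j < length ?vs" "?vs ! i = ?vs ! j"
    using assms(2) unfolding distinct_conv_nth
    by (metis linorder_neqE_nat)
  have 1: "comb_path E u (?vs ! i) (take i es)"
    using comb_path_take[OF assms(1), of i] ij by simp
  have 2: "comb_path E (?vs ! j) v (drop j es)"
    using comb_path_drop[OF assms(1), of j] ij by simp
  have "comb_path E u v (take i es @ drop j es)"
    using 1 2 ij(3) comb_path_append by metis
  moreover have "length (take i es @ drop j es) < length es" using ij by simp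
  ultimately show ?thesis by blast
qed

lemma cycle_nth:
  assumes "successively A vs" "A (last vs) (hd vs)" "vs \<noteq> []"
  shows "\<forall>i<length vs. A (vs ! i) (vs ! ((i + 1) mod length vs))"
proof (intro allI impI)
  fix i assume i: "i < length vs"
  show "A (vs ! i) (vs ! ((i + 1) mod length vs))"
  proof (cases "Suc i < length vs")
    case True
    then show ?thesis using successively_nth[OF assms(1) True] by simp
  next
    case False
    then have "i = length vs - 1" using i by simp
    then have "vs ! i = last vs" "(i + 1) mod length vs = 0"
      using assms(3) by (auto simp: last_conv_nth)
    then show ?thesis using assms(2,3) by (simp add: hd_conv_nth)
  qed
qed

definition NC :: "'v set set \<Rightarrow> bool" where
  "NC T \<longleftrightarrow> \<not> (\<exists>vs. length vs \<ge> 3 \<and> distinct vs \<and>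
           (\<forall>i < length vs. {vs ! i, vs ! ((i + 1) mod length vs)} \<in> T))"

lemma adj_sym: "({a, b} \<in> T) = ({b, a} \<in> T)"
  by (simp add: insert_commute)

lemma successively_take:
  "successively P xs \<Longrightarrow> successively P (take k xs)"
  by (metis append_take_drop_id successively_append_iff)

lemma no_fork:
  assumes nc: "NC T"
    and s1: "successively (\<lambda>a b. {a, b} \<in> T) (x # xs')"
    and s2: "successively (\<lambda>a b. {a, b} \<in> T) (x # ys')"
    and d1: "distinct (x # xs')" and d2: "distinct (x # ys')"
    and ne: "xs' \<noteq> []" "ys' \<noteq> []" and hd: "hd xs' \<noteq> hd ys'"
    and la: "last xs' = last ys'"
  shows False
proof -
  let ?A = "\<lambda>a b. {a, b} \<in> T"
  let ?P = "\<lambda>i. i < length xs' \<and> xs' ! i \<in> set ys'"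
  have ex: "?P (length xs' - 1)"
    using ne la by (metis diff_less last_conv_nth last_in_set length_greater_0_conv zero_less_one)
  define i where "i = (LEAST i. ?P i)"
  have Pi: "?P i" unfolding i_def by (rule LeastI[of ?P, OF ex])
  have notin: "\<And>k. k < i \<Longrightarrow> xs' ! k \<notin> set ys'"
    using not_less_Least Pi unfolding i_def by (metis (no_types, lifting) order.strict_trans)
  obtain j where j: "j < length ys'" "ys' ! j = xs' ! i"
    using Pi by (metis in_set_conv_nth)
  define ys where "ys = x # ys'"
  define vs where "vs = take (Suc i) xs' @ rev (take (Suc j) ys)"
  have len: "length vs = Suc i + Suc j"
    using Pi j unfolding vs_def ys_def by simp
  have ge3: "length vs \<ge> 3"
  proof (rule ccontr)
    assume "\<not> ?thesis"
    then have "i = 0" "j = 0" using len by auto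
    then show False using j hd ne by (simp add: hd_conv_nth)
  qed
  have tk1: "take (Suc i) xs' = take i xs' @ [xs' ! i]"
    using Pi by (simp add: take_Suc_conv_app_nth)
  have tk2: "take (Suc j) ys = x # take j ys'" unfolding ys_def by simp
  have dys': "distinct ys'" using d2 by simp
  have disj: "set (take (Suc i) xs') \<inter> set (take (Suc j) ys) = {}"
  proof (rule ccontr)
    assume "\<not> ?thesis"
    then obtain z where z1: "z \<in> set (take (Suc i) xs')" and z2: "z \<in> set (take (Suc j) ys)" by blast
    from z1 obtain k where k0: "k < length (take (Suc i) xs')" "take (Suc i) xs' ! k = z"
      unfolding in_set_conv_nth by blast
    then have k: "k \<le> i" "z = xs' ! k" using Pi by auto
    have "z \<noteq> x" using d1 k Pi by auto
    then have "z \<in> set (take j ys')" using z2 tk2 by simp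
    then obtain l0 where l0: "l0 < length (take j ys')" "take j ys' ! l0 = z"
      unfolding in_set_conv_nth by blast
    then have l: "l0 < j" "z = ys' ! l0" by auto
    then have "z \<in> set ys'" using j by simp
    then have "k = i" using notin k by (metis le_neq_implies_less)
    then have "ys' ! l0 = ys' ! j" using k l j by simp
    moreover have "l0 < length ys'" using l j by simp
    ultimately have "l0 = j" using \<open>ys' ! l0 = ys' ! j\<close> j dys' nth_eq_iff_index_eq by blast
    then show False using l by simp
  qed
  have dist: "distinct vs"
    unfolding vs_def using disj d1 d2 by (simp add: ys_def del: take_Suc_Cons)
  have sA: "successively ?A (take (Suc i) xs')"
    using s1 by (auto intro: successively_take simp: successively_Cons)
  have sB: "successively ?A (rev (take (Suc j) ys))"
  proof -
    have "successively ?A (take (Suc j) ys)" using s2 unfolding ys_def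
      by (rule successively_take)
    then show ?thesis by (simp add: adj_sym)
  qed
  have lastA: "last (take (Suc i) xs') = xs' ! i" using tk1 by simp
  have hdB: "hd (rev (take (Suc j) ys)) = ys ! j"
    using j unfolding ys_def by (simp add: hd_rev take_Suc_conv_app_nth del: take_Suc_Cons)
  have junc: "?A (xs' ! i) (ys ! j)"
  proof -
    have "?A (ys ! j) (ys ! Suc j)"
      by (rule successively_nth[OF s2[folded ys_def]]) (use j ys_def in simp)
    then show ?thesis using j unfolding ys_def by (simp add: adj_sym)
  qed
  have svs: "successively ?A vs"
    unfolding vs_def successively_append_iff using sA sB lastA hdB junc by simp
  have lastv: "last vs = x" unfolding vs_def ys_def by (simp add: last_rev)
  have hdv: "hd vs = hd xs'" unfolding vs_def using ne by (simp add: hd_take)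
  have wrap: "?A (last vs) (hd vs)"
    using s1 ne lastv hdv by (auto simp: successively_Cons)
  have "\<forall>i<length vs. {vs ! i, vs ! ((i + 1) mod length vs)} \<in> T"
    using cycle_nth[of ?A vs, OF svs wrap] ge3 by (metis list.size(3) not_numeral_le_zero)
  then show False using nc ge3 dist unfolding NC_def by blast
qed

lemma tree_unique:
  assumes nc: "NC T"
  shows "successively (\<lambda>a b. {a, b} \<in> T) xs \<Longrightarrow> successively (\<lambda>a b. {a, b} \<in> T) ys \<Longrightarrow>
    distinct xs \<Longrightarrow> distinct ys \<Longrightarrow> xs \<noteq> [] \<Longrightarrow> ys \<noteq> [] \<Longrightarrow> hd xs = hd ys \<Longrightarrow>
    last xs = last ys \<Longrightarrow> xs = ys"
proof (induction xs arbitrary: ys)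
  case Nil then show ?case by simp
next
  case (Cons x xs')
  obtain ys' where ys: "ys = x # ys'" using Cons.prems by (cases ys) auto
  show ?case
  proof (cases "xs' = []")
    case True
    then have "last ys = x" using Cons.prems by simp
    then have "ys' = []" using Cons.prems(4) ys by (metis distinct.simps(2) last.simps last_in_set)
    then show ?thesis using True ys by simp
  next
    case xne: False
    show ?thesis
    proof (cases "ys' = []")
      case True
      then have "last (x # xs') = x" using Cons.prems ys by simp
      then have False using Cons.prems(3) xne by (metis distinct.simps(2) last.simps last_in_set)
      then show ?thesis ..
    next
      case yne: False
      show ?thesis
      proof (cases "hd xs' = hd ys'")
        case True
        have "xs' = ys'"
          apply (rule Cons.IH)
          using Cons.prems ys xne yne True by (auto simp: successively_Cons)
        then show ?thesis using ys by simp
      next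
        case False
        have "False"
          apply (rule no_fork[OF nc, of x xs' ys'])
          using Cons.prems ys xne yne False by auto
        then show ?thesis ..
      qed
    qed
  qed
qed

lemma st_NC: "spanning_tree \<Delta> T \<Longrightarrow> NC T"
  unfolding spanning_tree_def NC_def by (elim conjE)

lemma tree_edges_sub: "spanning_tree \<Delta> T \<Longrightarrow> tree_edges T \<subseteq> Edge \<Delta>"
proof
  fix x assume st: "spanning_tree \<Delta> T" and x: "x \<in> tree_edges T"
  obtain a b where ab: "x = (a, b)" "a \<noteq> b" "{a, b} \<in> T"
    using x unfolding tree_edges_def by (cases x) simp
  have sub: "T \<subseteq> {{u, v} | u v. u \<noteq> v \<and> {u, v} \<in> \<Delta>}"
    using st unfolding spanning_tree_def by (elim conjE)
  have "{a, b} \<in> {{u, v} | u v. u \<noteq> v \<and> {u, v} \<in> \<Delta>}"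
    by (rule subsetD[OF sub ab(3)])
  then have "\<exists>u v. {a, b} = {u, v} \<and> u \<noteq> v \<and> {u, v} \<in> \<Delta>"
    by (simp only: mem_Collect_eq)
  then obtain u v where h: "{a, b} = {u, v}" "{u, v} \<in> \<Delta>" by blast
  have "{a, b} \<in> \<Delta>" unfolding h(1) by (rule h(2))
  then show "x \<in> Edge \<Delta>" using ab unfolding Edge_def by simp
qed

lemma comb_path_set: "comb_path E u v es \<Longrightarrow> set es \<subseteq> E"
  by (induction es arbitrary: u) auto

definition minp :: "'v set set \<Rightarrow> 'v \<Rightarrow> 'v \<Rightarrow> ('v \<times> 'v) list \<Rightarrow> bool" where
  "minp T u v es \<longleftrightarrow> comb_path (tree_edges T) u v es \<and>
     (\<forall>es'. comb_path (tree_edges T) u v es' \<longrightarrow> length es \<le> length es')"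

lemma minp_distinct: "minp T u v es \<Longrightarrow> distinct (u # map snd es)"
proof (rule ccontr)
  assume m: "minp T u v es" and nd: "\<not> distinct (u # map snd es)"
  then obtain es' where "comb_path (tree_edges T) u v es'" "length es' < length es"
    using comb_path_shortcut[of "tree_edges T" u v es] m nd unfolding minp_def by auto
  then show False using m unfolding minp_def by (meson leD)
qed

lemma minp_unique:
  assumes "NC T" "minp T u v es1" "minp T u v es2"
  shows "es1 = es2"
proof -
  have p1: "comb_path (tree_edges T) u v es1" and p2: "comb_path (tree_edges T) u v es2"
    using assms unfolding minp_def by auto
  note s1 = comb_path_succ[OF p1] and s2 = comb_path_succ[OF p2]
  have "u # map snd es1 = u # map snd es2"
  proof (rule tree_unique[OF assms(1)])
    show "successively (\<lambda>a b. {a, b} \<in> T) (u # map snd es1)" using s1 by (rule conjunct1)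
    show "successively (\<lambda>a b. {a, b} \<in> T) (u # map snd es2)" using s2 by (rule conjunct1)
    show "distinct (u # map snd es1)" by (rule minp_distinct[OF assms(2)])
    show "distinct (u # map snd es2)" by (rule minp_distinct[OF assms(3)])
    show "last (u # map snd es1) = last (u # map snd es2)" using s1 s2 by simp
  qed simp_all
  then show ?thesis using comb_path_det[OF p1 p2] by simp
qed

lemma geo:
  assumes "spanning_tree \<Delta> T" "u \<in> vertices \<Delta>" "v \<in> vertices \<Delta>"
  shows "minp T u v (tree_geodesic T u v)"
proof -
  obtain es0 where "comb_path (tree_edges T) u v es0"
    using assms unfolding spanning_tree_def by blast
  from ex_has_least_nat[of "comb_path (tree_edges T) u v" es0 length, OF this]
  obtain es where es: "minp T u v es"
    unfolding minp_def by blast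
  have uq: "\<And>es'. minp T u v es' \<Longrightarrow> es' = es"
    using es minp_unique[OF st_NC[OF assms(1)]] by blast
  have "tree_geodesic T u v = es"
    unfolding tree_geodesic_def
  proof (rule the_equality)
    show "comb_path (tree_edges T) u v es \<and>
        (\<forall>es'. comb_path (tree_edges T) u v es' \<longrightarrow> length es \<le> length es')"
      using es unfolding minp_def .
    fix es' assume "comb_path (tree_edges T) u v es' \<and>
        (\<forall>es''. comb_path (tree_edges T) u v es'' \<longrightarrow> length es' \<le> length es'')"
    then have "minp T u v es'" unfolding minp_def .
    then show "es' = es" by (rule uq)
  qed
  then show ?thesis using es by simp
qed

lemma rev_edge_tree: "e \<in> tree_edges T \<Longrightarrow> rev_edge e \<in> tree_edges T"
  unfolding tree_edges_def rev_edge_def by (auto simp: insert_commute)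

lemma comb_path_rev:
  "comb_path (tree_edges T) u v es \<Longrightarrow> comb_path (tree_edges T) v u (rev (map rev_edge es))"
proof (induction es arbitrary: u)
  case Nil then show ?case by simp
next
  case (Cons a es)
  then have "comb_path (tree_edges T) v (snd a) (rev (map rev_edge es))" by simp
  moreover have "comb_path (tree_edges T) (snd a) u [rev_edge a]"
    using Cons.prems rev_edge_tree[of a T] by (simp add: rev_edge_def)
  ultimately have "comb_path (tree_edges T) v u (rev (map rev_edge es) @ [rev_edge a])"
    unfolding comb_path_append by blast
  then show ?case by simp
qed

lemma geo_rev:
  assumes "spanning_tree \<Delta> T" "u \<in> vertices \<Delta>" "v \<in> vertices \<Delta>"
  shows "tree_geodesic T v u = rev (map rev_edge (tree_geodesic T u v))"
proof -
  have g: "minp T u v (tree_geodesic T u v)" by (rule geo[OF assms])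
  have gp: "comb_path (tree_edges T) u v (tree_geodesic T u v)"
    and gm: "\<And>es'. comb_path (tree_edges T) u v es' \<Longrightarrow> length (tree_geodesic T u v) \<le> length es'"
    using g unfolding minp_def by auto
  have "minp T v u (rev (map rev_edge (tree_geodesic T u v)))"
    unfolding minp_def
  proof (intro conjI allI impI)
    show "comb_path (tree_edges T) v u (rev (map rev_edge (tree_geodesic T u v)))"
      by (rule comb_path_rev[OF gp])
  next
    fix es' assume "comb_path (tree_edges T) v u es'"
    then have "comb_path (tree_edges T) u v (rev (map rev_edge es'))" by (rule comb_path_rev)
    then have "length (tree_geodesic T u v) \<le> length (rev (map rev_edge es'))"
      by (rule gm)
    then show "length (rev (map rev_edge (tree_geodesic T u v))) \<le> length es'"
      by simp
  qed
  then show ?thesis by (rule minp_unique[OF st_NC[OF assms(1)] geo[OF assms(1,3,2)]])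
qed

definition rb :: "'v word \<Rightarrow> 'v word" where
  "rb w = rev (map (\<lambda>a. (rev_edge (fst a), snd a)) w)"

lemma rb_append: "rb (a @ b) = rb b @ rb a" by (simp add: rb_def)

lemma rb_epow: "rb (epow e m) = epow (rev_edge e) m"
  by (simp add: rb_def epow_def)

lemma rb_concat: "rb (concat xs) = concat (rev (map rb xs))"
  by (induction xs) (auto simp: rb_append, simp add: rb_def)

lemma p_n_rev:
  assumes "tree_geodesic T v u = rev (map rev_edge (tree_geodesic T u v))"
  shows "p_n T n v u = rb (p_n T n u v)"
  unfolding p_n_def assms rb_concat by (simp add: rev_map rb_epow comp_def)

lemma frs_prefix: "free_red_step y z \<Longrightarrow> free_red_step (c @ y) (c @ z)"
proof -
  assume "free_red_step y z"
  then obtain xs ys a where "y = xs @ [a, inv_letter a] @ ys" "z = xs @ ys"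
    unfolding free_red_step_def by blast
  then show ?thesis unfolding free_red_step_def
    by (intro exI[of _ "c @ xs"] exI[of _ ys] exI[of _ a]) simp
qed

lemma fe_prefix: "freely_equal a b \<Longrightarrow> freely_equal (c @ a) (c @ b)"
  unfolding freely_equal_def
proof (induction rule: rtranclp_induct)
  case base then show ?case by simp
next
  case (step y z)
  have "symclp free_red_step (c @ y) (c @ z)"
    using step(2) frs_prefix unfolding symclp_def by blast
  from rtranclp.rtrancl_into_rtrancl[OF step(3) this] show ?case .
qed

lemma fe_trans: "freely_equal a b \<Longrightarrow> freely_equal b c \<Longrightarrow> freely_equal a c"
  unfolding freely_equal_def by (rule rtranclp_trans)

lemma inv_letter_inv: "inv_letter (inv_letter a) = a"
  by (simp add: inv_letter_def)

lemma fe_cancel: "freely_equal (x @ z) (x @ inv_word w @ w @ z)"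
proof (induction w)
  case Nil then show ?case by (simp add: freely_equal_def inv_word_def)
next
  case (Cons a w)
  have "free_red_step (x @ inv_word (a # w) @ (a # w) @ z) (x @ inv_word w @ w @ z)"
    unfolding free_red_step_def
    apply (rule exI[of _ "x @ inv_word w"], rule exI[of _ "w @ z"], rule exI[of _ "inv_letter a"])
    by (simp add: inv_word_def inv_letter_inv)
  then have "freely_equal (x @ inv_word w @ w @ z) (x @ inv_word (a # w) @ (a # w) @ z)"
    unfolding freely_equal_def by (simp add: symclp_def r_into_rtranclp)
  then show ?case using Cons fe_trans by blast
qed

lemma Edge_rev: "g \<in> Edge \<Delta> \<Longrightarrow> rev_edge g \<in> Edge \<Delta>"
  unfolding Edge_def rev_edge_def by (auto simp: insert_commute)

lemma pal_exists:
  "word_over \<Delta> u \<Longrightarrow> \<exists>xs rs. length xs = length u \<and> length rs = length u \<and>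
       (\<forall>x\<in>set xs. word_over \<Delta> x) \<and>
       (\<forall>r\<in>set rs. r \<in> RH \<Delta> \<or> inv_word r \<in> RH \<Delta>) \<and>
       freely_equal (u @ rb u) (concat (map2 (\<lambda>x r. x @ r @ inv_word x) xs rs))"
proof (induction u rule: rev_induct)
  case Nil then show ?case by (simp add: freely_equal_def rb_def)
next
  case (snoc a u)
  have wu: "word_over \<Delta> u" using snoc.prems by (simp add: word_over_def)
  obtain xs rs where IH: "length xs = length u" "length rs = length u"
       "\<forall>x\<in>set xs. word_over \<Delta> x"
       "\<forall>r\<in>set rs. r \<in> RH \<Delta> \<or> inv_word r \<in> RH \<Delta>"
       "freely_equal (u @ rb u) (concat (map2 (\<lambda>x r. x @ r @ inv_word x) xs rs))"
    using snoc.IH[OF wu] by blast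
  obtain g b where a: "a = (g, b)" by (cases a)
  have g: "g \<in> Edge \<Delta>" using snoc.prems a by (simp add: word_over_def)
  define r where "r = [(g, b), (rev_edge g, b)]"
  have rok: "r \<in> RH \<Delta> \<or> inv_word r \<in> RH \<Delta>"
  proof (cases b)
    case False then show ?thesis using g unfolding r_def RH_def by blast
  next
    case True
    have "inv_word r = [(rev_edge g, False), (rev_edge (rev_edge g), False)]"
      using True unfolding r_def inv_word_def inv_letter_def rev_edge_def by simp
    then show ?thesis using Edge_rev[OF g] unfolding RH_def by blast
  qed
  have w: "(u @ [a]) @ rb (u @ [a]) = u @ r @ rb u"
    unfolding r_def a by (simp add: rb_def)
  let ?f = "\<lambda>x r. x @ r @ inv_word x"
  have c1: "freely_equal (u @ r @ rb u) ((u @ r @ inv_word u) @ (u @ rb u))"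
    using fe_cancel[of "u @ r" "rb u" u] by simp
  have c2: "freely_equal ((u @ r @ inv_word u) @ (u @ rb u))
     ((u @ r @ inv_word u) @ concat (map2 ?f xs rs))"
    by (rule fe_prefix[OF IH(5)])
  have e: "concat (map2 ?f (u # xs) (r # rs)) = (u @ r @ inv_word u) @ concat (map2 ?f xs rs)"
    by simp
  have fe: "freely_equal (u @ r @ rb u) (concat (map2 ?f (u # xs) (r # rs)))"
    unfolding e by (rule fe_trans[OF c1 c2])
  show ?case
  proof (rule exI[of _ "u # xs"], rule exI[of _ "r # rs"], intro conjI)
    show "length (u # xs) = length (u @ [a])" using IH(1) by simp
    show "length (r # rs) = length (u @ [a])" using IH(2) by simp
    show "\<forall>x\<in>set (u # xs). word_over \<Delta> x" using IH(3) wu by simp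
    show "\<forall>r'\<in>set (r # rs). r' \<in> RH \<Delta> \<or> inv_word r' \<in> RH \<Delta>" using IH(4) rok by simp
    show "freely_equal ((u @ [a]) @ rb (u @ [a])) (concat (map2 ?f (u # xs) (r # rs)))"
      unfolding w by (rule fe)
  qed
qed

lemma pal_area:
  assumes wo: "word_over \<Delta> u"
  shows "Area \<Delta> (u @ rb u) \<le> length u"
proof -
  from pal_exists[OF wo] obtain xs rs where H: "length xs = length u" "length rs = length u"
       "\<forall>x\<in>set xs. word_over \<Delta> x"
       "\<forall>r\<in>set rs. r \<in> RH \<Delta> \<or> inv_word r \<in> RH \<Delta>"
       "freely_equal (u @ rb u) (concat (map2 (\<lambda>x r. x @ r @ inv_word x) xs rs))"
    by blast
  show ?thesis
    unfolding Area_def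
    apply (rule Least_le)
    apply (rule exI[of _ xs], rule exI[of _ rs])
    using H by simp
qed

lemma length_epow: "length (epow e m) = nat \<bar>m\<bar>"
  by (simp add: epow_def)

lemma fst_epow: "a \<in> set (epow e m) \<Longrightarrow> fst a = e"
  by (auto simp: epow_def split: if_splits)

lemma length_p_n: "length (p_n T n u v) = length (tree_geodesic T u v) * nat \<bar>n\<bar>"
  by (simp add: p_n_def length_concat length_epow comp_def sum_list_triv)

lemma set_p_n:
  assumes "a \<in> set (p_n T n u v)"
  shows "fst a \<in> set (tree_geodesic T u v)"
proof -
  obtain g where g: "g \<in> set (tree_geodesic T u v)" "a \<in> set (epow g n)"
    using assms unfolding p_n_def by auto
  have "fst a = g" by (rule fst_epow[OF g(2)])
  then show ?thesis using g(1) by simp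
qed

lemma word_over_p_n:
  assumes "spanning_tree \<Delta> T" "u \<in> vertices \<Delta>" "v \<in> vertices \<Delta>"
  shows "word_over \<Delta> (p_n T n u v)"
proof -
  have gp: "comb_path (tree_edges T) u v (tree_geodesic T u v)"
    using geo[OF assms] unfolding minp_def by (rule conjunct1)
  have "set (tree_geodesic T u v) \<subseteq> Edge \<Delta>"
    using comb_path_set[OF gp] tree_edges_sub[OF assms(1)] by (rule order_trans)
  then show ?thesis unfolding word_over_def using set_p_n by (metis subsetD)
qed

lemma geo_le_L:
  assumes "abs_simplicial_complex \<Delta>" "finite \<Delta>" "u \<in> vertices \<Delta>" "v \<in> vertices \<Delta>"
  shows "length (tree_geodesic T u v) \<le> tree_L \<Delta> T"
proof -
  have "\<forall>\<sigma>\<in>\<Delta>. finite \<sigma> \<and> \<sigma> \<noteq> {}"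
    using assms(1) unfolding abs_simplicial_complex_def by (rule conjunct1)
  then have fv: "finite (vertices \<Delta>)"
    unfolding vertices_def using assms(2) by (simp add: finite_Union)
  have "finite {length (tree_geodesic T u v) | u v. u \<in> vertices \<Delta> \<and> v \<in> vertices \<Delta>}"
    by (rule finite_image_set2) (use fv in simp_all)
  moreover have "length (tree_geodesic T u v) \<in> {length (tree_geodesic T u v) | u v. u \<in> vertices \<Delta> \<and> v \<in> vertices \<Delta>}"
    using assms(3,4) by blast
  ultimately show ?thesis unfolding tree_L_def by (rule Max_ge)
qed

lemma fst_rev_edge[simp]: "fst (rev_edge e) = snd e" and snd_rev_edge[simp]: "snd (rev_edge e) = fst e"
  by (simp_all add: rev_edge_def)

theorem lemma4p2:
  fixes \<Delta> T :: "'v set set" and q :: 'v and e :: "'v \<times> 'v" and n :: int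
  assumes "abs_simplicial_complex \<Delta>" and "finite \<Delta>" and "flag \<Delta>"
    and "simply_connected (geom_realization \<Delta>)"
    and "q \<in> vertices \<Delta>" and "spanning_tree \<Delta> T"
    and "e \<in> Edge \<Delta>"
  shows "Area \<Delta> (Phi T q n [(e, False), (rev_edge e, False)])
           \<le> (2 * tree_L \<Delta> T + 1) * nat \<bar>n\<bar> + 1"
proof -
  have ed: "{fst e, snd e} \<in> \<Delta>" using assms(7) unfolding Edge_def by auto
  have a: "fst e \<in> vertices \<Delta>" "snd e \<in> vertices \<Delta>"
    using ed unfolding vertices_def by blast+
  note st = assms(6) and qv = assms(5)
  define P1 where "P1 = p_n T n q (fst e)"
  define P2 where "P2 = p_n T n (snd e) q"
  define u where "u = P1 @ epow e (n + 1) @ P2"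
  have P3: "p_n T n q (snd e) = rb P2"
    unfolding P2_def by (rule p_n_rev[OF geo_rev[OF st a(2) qv]])
  have P4: "p_n T n (fst e) q = rb P1"
    unfolding P1_def by (rule p_n_rev[OF geo_rev[OF st qv a(1)]])
  have phi: "Phi T q n [(e, False), (rev_edge e, False)] = u @ rb u"
    unfolding u_def rb_append rb_epow
    by (simp add: Phi_def Phi_letter_def P3 P4 P1_def P2_def)
  have wo: "word_over \<Delta> u"
  proof -
    have "word_over \<Delta> P1" unfolding P1_def by (rule word_over_p_n[OF st qv a(1)])
    moreover have "word_over \<Delta> P2" unfolding P2_def by (rule word_over_p_n[OF st a(2) qv])
    moreover have "word_over \<Delta> (epow e (n + 1))"
      unfolding word_over_def using fst_epow assms(7) by blast
    ultimately show ?thesis unfolding u_def word_over_def by auto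
  qed
  have ar: "Area \<Delta> (u @ rb u) \<le> length u" by (rule pal_area[OF wo])
  define N where "N = nat \<bar>n\<bar>"
  define L where "L = tree_L \<Delta> T"
  have l1: "length P1 \<le> L * N"
    unfolding P1_def length_p_n N_def L_def
    by (rule mult_le_mono1, rule geo_le_L[OF assms(1,2) qv a(1)])
  have l2: "length P2 \<le> L * N"
    unfolding P2_def length_p_n N_def L_def
    by (rule mult_le_mono1, rule geo_le_L[OF assms(1,2) a(2) qv])
  have l3: "length (epow e (n + 1)) \<le> N + 1"
    unfolding length_epow N_def by linarith
  have "length u \<le> (2 * L + 1) * N + 1"
    using l1 l2 l3 unfolding u_def by (simp add: algebra_simps)
  then show ?thesis using ar phi unfolding L_def N_def by simp
qed

end
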